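(* $\mathtt{normal}$-$\mathtt{pred}$-$\mathtt{ESO}$-$\mathtt{HORN}\subseteq\mathtt{RealTime_{OIA}}$: for every normalized predecessor Horn formula $\Phi$ there is a one-way iterative array $\mathcal A$ accepting in real time exactly the words $w\in\Sigma^+$ with $\langle w\rangle\models\Phi$.
   Context: Fix a finite alphabet $\Sigma$. A nonempty word $w=w_1\cdots w_n$ is represented by the structure $\langle w\rangle=([1,n];(Q_s)_{s\in\Sigma},\mathtt{min},\mathtt{max},\mathtt{suc},\mathtt{pred})$ with $Q_s(i)\iff w_i=s$, $\mathtt{min}(i)\iff i=1$, $\mathtt{max}(i)\iff i=n$, $\mathtt{suc}(i)=\min(i+1,n)$, $\mathtt{pred}(i)=\max(i-1,1)$; $x-1=\mathtt{pred}(x)$. A normalized predecessor Horn formula is $\Phi=\exists\mathbf{R}\forall x\forall y\,\psi(x,y)$, with $\mathbf{R}$ a finite set of binary relation symbols and $\psi$ a conjunction of clauses each of one of the forms: input clauses $\mathtt{min}(x)\wedge\mathtt{min}(y)\wedge Q_s(y)\to R(x,y)$ or $\mathtt{min}(x)\wedge\neg\mathtt{min}(y)\wedge Q_s(y)\to R(x,y)$ ($s\in\Sigma$, $R\in\mathbf{R}$); the contradiction clause $\mathtt{max}(x)\wedge\mathtt{max}(y)\wedge R_\bot(x,y)\to\bot$ for a fixed $R_\bot\in\mathbf{R}$; computation clauses $\delta_1\wedge\cdots\wedge\delta_r\to R(x,y)$ with $R\in\mathbf{R}$ and each $\delta_i$ a conjunction $S(x-1,y)\wedge\neg\mathtt{min}(x)$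 or $S(x,y-1)\wedge\neg\mathtt{min}(y)$, $S\in\mathbf{R}$. $\mathtt{normal}$-$\mathtt{pred}$-$\mathtt{ESO}$-$\mathtt{HORN}$ is the class of languages $\{w\in\Sigma^+:\langle w\rangle\models\Phi\}$ for such $\Phi$. A one-way iterative array (OIA) is a cellular automaton with finite state set $Q$, accepting states $Q_{accept}\subseteq Q$, neighborhood $\{-1,0\}$, transition function $\delta:Q^2\to Q$, and an input transition function $\delta_{input}$ for the first cell. On input $w=w_1\cdots w_n$ it uses cells $1,\dots,n$; cells outside are permanently in a state $\sharp$, cells not yet reached by information are in a quiescent state $\lambda$. Input is sequential: the letter $w_i$ is given to cell $1$ at time $i$ (the new state of cell 1 at time $i\le n$ is computed by $\delta_{input}$ from $w_i$ and the previous states); other cells are updated by $\langle c,t\rangle=\delta(\langle c-1,t-1\rangle,\langle c,t-1\rangle)$. The output cell is cell $n$, and $w$ is accepted in real time iff $\langle n,2n-1\rangle\in Q_{accept}$ (the first time at which cell $n$ has received information from all letters). $\mathtt{RealTime_{OIA}}$ is the class of languages so accepted. *)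

theory Defs
  imports Main
begin

text \<open>A nonempty word w (a list) has domain positions 1..length w;
  position i carries letter w ! (i - 1).\<close>

definition w_Q :: "'a list \<Rightarrow> 'a \<Rightarrow> nat \<Rightarrow> bool" where
  "w_Q w s i \<longleftrightarrow> w ! (i - 1) = s"

definition w_min :: "nat \<Rightarrow> bool" where
  "w_min i \<longleftrightarrow> i = 1"

definition w_max :: "'a list \<Rightarrow> nat \<Rightarrow> bool" where
  "w_max w i \<longleftrightarrow> i = length w"

definition w_pred :: "nat \<Rightarrow> nat" where
  "w_pred i = max (i - 1) 1"

text \<open>An atom of a computation clause: PredX S stands for S(x-1,y) and not min(x);
  PredY S stands for S(x,y-1) and not min(y).\<close>
datatype 'r hatom = PredX 'r | PredY 'r

text \<open>Input clause (True, s, R):  min(x) and min(y) and Q_s(y) implies R(x,y);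
      input clause (False, s, R): min(x) and not min(y) and Q_s(y) implies R(x,y).
  Computation clause (ds, R): conjunction of atoms ds implies R(x,y).\<close>
record ('a, 'r) nph_formula =
  rels :: "'r set"
  inputs :: "(bool \<times> 'a \<times> 'r) list"
  rbot :: 'r
  comps :: "('r hatom list \<times> 'r) list"

fun hatom_rel :: "'r hatom \<Rightarrow> 'r" where
  "hatom_rel (PredX S) = S" | "hatom_rel (PredY S) = S"

definition nph_wf :: "('a, 'r) nph_formula \<Rightarrow> bool" where
  "nph_wf \<Phi> \<longleftrightarrow> finite (rels \<Phi>) \<and> rbot \<Phi> \<in> rels \<Phi>
     \<and> (\<forall>(b, s, R) \<in> set (inputs \<Phi>). R \<in> rels \<Phi>)
     \<and> (\<forall>(ds, R) \<in> set (comps \<Phi>). ds \<noteq> [] \<and> R \<in> rels \<Phi>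
            \<and> (\<forall>d \<in> set ds. hatom_rel d \<in> rels \<Phi>))"

fun hatom_sat :: "('r \<Rightarrow> nat \<Rightarrow> nat \<Rightarrow> bool) \<Rightarrow> nat \<Rightarrow> nat \<Rightarrow> 'r hatom \<Rightarrow> bool" where
  "hatom_sat I x y (PredX S) \<longleftrightarrow> I S (w_pred x) y \<and> \<not> w_min x"
| "hatom_sat I x y (PredY S) \<longleftrightarrow> I S x (w_pred y) \<and> \<not> w_min y"

definition input_sat :: "'a list \<Rightarrow> ('r \<Rightarrow> nat \<Rightarrow> nat \<Rightarrow> bool) \<Rightarrow> nat \<Rightarrow> nat
     \<Rightarrow> bool \<times> 'a \<times> 'r \<Rightarrow> bool" where
  "input_sat w I x y c = (case c of (b, s, R) \<Rightarrow>
     (w_min x \<and> (if b then w_min y else \<not> w_min y) \<and> w_Q w s y \<longrightarrow> I R x y))"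

definition psi_sat :: "('a, 'r) nph_formula \<Rightarrow> 'a list \<Rightarrow> ('r \<Rightarrow> nat \<Rightarrow> nat \<Rightarrow> bool)
     \<Rightarrow> nat \<Rightarrow> nat \<Rightarrow> bool" where
  "psi_sat \<Phi> w I x y \<longleftrightarrow>
     (\<forall>c \<in> set (inputs \<Phi>). input_sat w I x y c)
   \<and> (w_max w x \<and> w_max w y \<and> I (rbot \<Phi>) x y \<longrightarrow> False)
   \<and> (\<forall>(ds, R) \<in> set (comps \<Phi>). (\<forall>d \<in> set ds. hatom_sat I x y d) \<longrightarrow> I R x y)"

definition nph_models :: "'a list \<Rightarrow> ('a, 'r) nph_formula \<Rightarrow> bool" where
  "nph_models w \<Phi> \<longleftrightarrow> (\<exists>I. \<forall>x \<in> {1..length w}. \<forall>y \<in> {1..length w}. psi_sat \<Phi> w I x y)"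

record 'a oia =
  states :: "nat set"
  accepting :: "nat set"
  delta :: "nat \<Rightarrow> nat \<Rightarrow> nat"
  delta_input :: "'a \<Rightarrow> nat \<Rightarrow> nat"
  border :: nat
  quiescent :: nat

definition oia_wf :: "'a oia \<Rightarrow> bool" where
  "oia_wf A \<longleftrightarrow> finite (states A) \<and> accepting A \<subseteq> states A
     \<and> border A \<in> states A \<and> quiescent A \<in> states A \<and> border A \<noteq> quiescent A
     \<and> (\<forall>p \<in> states A. \<forall>q \<in> states A. delta A p q \<in> states A)
     \<and> (\<forall>a. \<forall>q \<in> states A. delta_input A a q \<in> states A)
     \<and> delta A (quiescent A) (quiescent A) = quiescent A"

fun oia_cell :: "'a oia \<Rightarrow> 'a list \<Rightarrow> nat \<Rightarrow> nat \<Rightarrow> nat" where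
  "oia_cell A w c 0 = (if c = 0 then border A else quiescent A)"
| "oia_cell A w c (Suc t) =
     (if c = 0 then border A
      else if c = 1 \<and> Suc t \<le> length w then delta_input A (w ! t) (oia_cell A w 1 t)
      else delta A (oia_cell A w (c - 1) t) (oia_cell A w c t))"

definition oia_accepts_rt :: "'a oia \<Rightarrow> 'a list \<Rightarrow> bool" where
  "oia_accepts_rt A w \<longleftrightarrow>
     oia_cell A w (length w) (2 * length w - 1) \<in> accepting A"

end

theory Submission
  imports Defs
begin

fun atom_in :: "'r set \<Rightarrow> 'r set \<Rightarrow> 'r hatom \<Rightarrow> bool" where
  "atom_in X Y (PredX S) = (S \<in> X)"
| "atom_in X Y (PredY S) = (S \<in> Y)"

definition compT :: "('a, 'r) nph_formula \<Rightarrow> 'r set \<Rightarrow> 'r set \<Rightarrow> 'r set" where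
  "compT \<Phi> X Y = {R. \<exists>ds. (ds, R) \<in> set (comps \<Phi>) \<and> (\<forall>d\<in>set ds. atom_in X Y d)}"

definition inT :: "('a, 'r) nph_formula \<Rightarrow> bool \<Rightarrow> 'a \<Rightarrow> 'r set" where
  "inT \<Phi> b a = {R. (b, a, R) \<in> set (inputs \<Phi>)}"

fun Tf :: "('a, 'r) nph_formula \<Rightarrow> 'a list \<Rightarrow> nat \<Rightarrow> nat \<Rightarrow> 'r set" where
  "Tf \<Phi> w x y = (if x \<le> 1 then inT \<Phi> (y \<le> 1) (w ! (y - 1)) \<union> compT \<Phi> {} (if y \<le> 1 then {} else Tf \<Phi> w x (y - 1))
      else compT \<Phi> (Tf \<Phi> w (x - 1) y) (if y \<le> 1 then {} else Tf \<Phi> w x (y - 1)))"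

declare Tf.simps[simp del]

lemma compT_sub: "nph_wf \<Phi> \<Longrightarrow> compT \<Phi> X Y \<subseteq> rels \<Phi>"
  unfolding nph_wf_def compT_def by fastforce

lemma inT_sub: "nph_wf \<Phi> \<Longrightarrow> inT \<Phi> b a \<subseteq> rels \<Phi>"
  unfolding nph_wf_def inT_def by fastforce

lemma Tf_sub: "nph_wf \<Phi> \<Longrightarrow> Tf \<Phi> w x y \<subseteq> rels \<Phi>"
  by (subst Tf.simps) (auto dest: compT_sub inT_sub)

definition encS :: "('a, 'r) nph_formula \<Rightarrow> 'r set \<Rightarrow> nat" where
  "encS \<Phi> = (SOME h. bij_betw h (Pow (rels \<Phi>)) {0..<card (Pow (rels \<Phi>))})"

definition code :: "('a, 'r) nph_formula \<Rightarrow> 'r set \<Rightarrow> nat" where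
  "code \<Phi> S = encS \<Phi> S + 2"

definition decs :: "('a, 'r) nph_formula \<Rightarrow> nat \<Rightarrow> 'r set" where
  "decs \<Phi> q = (if 2 \<le> q \<and> q - 2 < card (Pow (rels \<Phi>))
      then inv_into (Pow (rels \<Phi>)) (encS \<Phi>) (q - 2) else {})"

lemma encS_bij: "nph_wf \<Phi> \<Longrightarrow> bij_betw (encS \<Phi>) (Pow (rels \<Phi>)) {0..<card (Pow (rels \<Phi>))}"
proof -
  assume "nph_wf \<Phi>"
  then have "finite (Pow (rels \<Phi>))" by (simp add: nph_wf_def)
  then have "\<exists>h. bij_betw h (Pow (rels \<Phi>)) {0..<card (Pow (rels \<Phi>))}"
    by (rule ex_bij_betw_finite_nat)
  then show ?thesis unfolding encS_def by (rule someI_ex)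
qed

lemma code_range: "nph_wf \<Phi> \<Longrightarrow> S \<subseteq> rels \<Phi> \<Longrightarrow> 2 \<le> code \<Phi> S \<and> code \<Phi> S - 2 < card (Pow (rels \<Phi>))"
  using encS_bij[of \<Phi>] unfolding code_def bij_betw_def by auto

lemma decs_code: "nph_wf \<Phi> \<Longrightarrow> S \<subseteq> rels \<Phi> \<Longrightarrow> decs \<Phi> (code \<Phi> S) = S"
  using encS_bij[of \<Phi>] code_range[of \<Phi> S] unfolding decs_def code_def
  by (simp add: bij_betw_def)

lemma code_inj: "nph_wf \<Phi> \<Longrightarrow> S \<subseteq> rels \<Phi> \<Longrightarrow> S' \<subseteq> rels \<Phi> \<Longrightarrow> code \<Phi> S = code \<Phi> S' \<Longrightarrow> S = S'"
  by (metis decs_code)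

definition theA :: "('a, 'r) nph_formula \<Rightarrow> 'a oia" where
  "theA \<Phi> = \<lparr> states = {0..<card (Pow (rels \<Phi>)) + 2},
     accepting = {q. \<exists>S. S \<subseteq> rels \<Phi> \<and> rbot \<Phi> \<notin> S \<and> q = code \<Phi> S},
     delta = (\<lambda>p q. if 2 \<le> p \<and> p - 2 < card (Pow (rels \<Phi>))
                 then code \<Phi> (compT \<Phi> (decs \<Phi> p) (decs \<Phi> q)) else q),
     delta_input = (\<lambda>a q. code \<Phi> (inT \<Phi> (q = 1) a \<union> compT \<Phi> {} (decs \<Phi> q))),
     border = 0, quiescent = 1 \<rparr>"

lemma theA_simps:
  "delta (theA \<Phi>) p q = (if 2 \<le> p \<and> p - 2 < card (Pow (rels \<Phi>))
                 then code \<Phi> (compT \<Phi> (decs \<Phi> p) (decs \<Phi> q)) else q)"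
  "delta_input (theA \<Phi>) a q = code \<Phi> (inT \<Phi> (q = 1) a \<union> compT \<Phi> {} (decs \<Phi> q))"
  "states (theA \<Phi>) = {0..<card (Pow (rels \<Phi>)) + 2}"
  "border (theA \<Phi>) = 0" "quiescent (theA \<Phi>) = 1"
  "accepting (theA \<Phi>) = {q. \<exists>S. S \<subseteq> rels \<Phi> \<and> rbot \<Phi> \<notin> S \<and> q = code \<Phi> S}"
  by (simp_all only: theA_def oia.select_convs)

lemma theA_wf: "nph_wf \<Phi> \<Longrightarrow> oia_wf (theA \<Phi>)"
proof -
  assume wf: "nph_wf \<Phi>"
  let ?N = "card (Pow (rels \<Phi>))"
  have c: "\<And>S. S \<subseteq> rels \<Phi> \<Longrightarrow> code \<Phi> S < ?N + 2"
  proof -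
    fix S assume "S \<subseteq> rels \<Phi>"
    from code_range[OF wf this] show "code \<Phi> S < ?N + 2" by linarith
  qed
  have c1: "\<And>X Y. code \<Phi> (compT \<Phi> X Y) < ?N + 2"
    using c compT_sub[OF wf] by blast
  have c2: "\<And>b a X Y. code \<Phi> (inT \<Phi> b a \<union> compT \<Phi> X Y) < ?N + 2"
  proof -
    fix b a X Y
    have "inT \<Phi> b a \<union> compT \<Phi> X Y \<subseteq> rels \<Phi>"
      using compT_sub[OF wf] inT_sub[OF wf] by blast
    then show "code \<Phi> (inT \<Phi> b a \<union> compT \<Phi> X Y) < ?N + 2" by (rule c)
  qed
  have acc: "\<And>q. \<exists>S. S \<subseteq> rels \<Phi> \<and> rbot \<Phi> \<notin> S \<and> q = code \<Phi> S \<Longrightarrow> q < ?N + 2"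
    using c by blast
  show ?thesis unfolding oia_wf_def
  proof (intro conjI)
    show "finite (states (theA \<Phi>))" unfolding theA_simps by simp
    show "accepting (theA \<Phi>) \<subseteq> states (theA \<Phi>)" unfolding theA_simps using c by auto
    show "border (theA \<Phi>) \<in> states (theA \<Phi>)" unfolding theA_simps by simp
    show "quiescent (theA \<Phi>) \<in> states (theA \<Phi>)" unfolding theA_simps by simp
    show "border (theA \<Phi>) \<noteq> quiescent (theA \<Phi>)" unfolding theA_simps by simp
    show "\<forall>p\<in>states (theA \<Phi>). \<forall>q\<in>states (theA \<Phi>). delta (theA \<Phi>) p q \<in> states (theA \<Phi>)"
      unfolding theA_simps using c1 by auto
    show "\<forall>a. \<forall>q\<in>states (theA \<Phi>). delta_input (theA \<Phi>) a q \<in> states (theA \<Phi>)"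
      unfolding theA_simps using c2 by auto
    show "delta (theA \<Phi>) (quiescent (theA \<Phi>)) (quiescent (theA \<Phi>)) = quiescent (theA \<Phi>)"
      unfolding theA_simps by simp
  qed
qed

lemma Tf_11: "Tf \<Phi> w 1 1 = inT \<Phi> True (w ! 0) \<union> compT \<Phi> {} {}"
  by (subst Tf.simps) simp

lemma Tf_1S: "1 \<le> y \<Longrightarrow> Tf \<Phi> w 1 (Suc y) = inT \<Phi> False (w ! y) \<union> compT \<Phi> {} (Tf \<Phi> w 1 y)"
  by (subst Tf.simps) simp

lemma Tf_x1: "2 \<le> x \<Longrightarrow> Tf \<Phi> w x 1 = compT \<Phi> (Tf \<Phi> w (x - 1) 1) {}"
  by (subst Tf.simps) simp

lemma Tf_xS: "2 \<le> x \<Longrightarrow> 1 \<le> y \<Longrightarrow> Tf \<Phi> w x (Suc y) = compT \<Phi> (Tf \<Phi> w (x - 1) (Suc y)) (Tf \<Phi> w x y)"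
  by (subst Tf.simps) simp

lemma cell_inv:
  assumes wf: "nph_wf \<Phi>" and ne: "w \<noteq> []"
  shows "1 \<le> c \<Longrightarrow> (t < c \<longrightarrow> oia_cell (theA \<Phi>) w c t = 1) \<and>
    (c \<le> t \<and> t - c + 1 \<le> length w \<longrightarrow> oia_cell (theA \<Phi>) w c t = code \<Phi> (Tf \<Phi> w c (t - c + 1)))"
proof (induction t arbitrary: c)
  case 0
  then show ?case by (simp add: theA_simps)
next
  case (Suc t)
  have cr: "\<And>S. S \<subseteq> rels \<Phi> \<Longrightarrow> 2 \<le> code \<Phi> S \<and> code \<Phi> S - 2 < card (Pow (rels \<Phi>))"
    using code_range[OF wf] by blast
  have dc: "\<And>x y. decs \<Phi> (code \<Phi> (Tf \<Phi> w x y)) = Tf \<Phi> w x y"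
    using decs_code[OF wf Tf_sub[OF wf]] by blast
  have crT: "\<And>x y. 2 \<le> code \<Phi> (Tf \<Phi> w x y) \<and> code \<Phi> (Tf \<Phi> w x y) - 2 < card (Pow (rels \<Phi>))"
    using cr Tf_sub[OF wf] by blast
  have d1: "decs \<Phi> 1 = {}" "decs \<Phi> (Suc 0) = {}" by (simp_all add: decs_def)
  have n1: "1 \<le> length w" using ne by (cases w) auto
  show ?case
  proof (cases "c = 1")
    case True
    show ?thesis
    proof (cases "Suc t \<le> length w")
      case False then show ?thesis using True by simp
    next
      case inp: True
      show ?thesis
      proof (cases t)
        case 0
        then show ?thesis using True inp using d1 Tf_11[of \<Phi> w] by (simp add: theA_simps)
      next
        case (Suc t')
        have ih: "oia_cell (theA \<Phi>) w 1 t = code \<Phi> (Tf \<Phi> w 1 t)"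
          using Suc.IH[of 1] Suc inp by simp
        have ne1: "code \<Phi> (Tf \<Phi> w 1 t) \<noteq> 1" using crT[of 1 t] by linarith
        have st: "oia_cell (theA \<Phi>) w 1 (Suc t) = delta_input (theA \<Phi>) (w ! t) (oia_cell (theA \<Phi>) w 1 t)"
          using inp by simp
        have tf: "Tf \<Phi> w 1 (Suc t) = inT \<Phi> False (w ! t) \<union> compT \<Phi> {} (Tf \<Phi> w 1 t)"
          using Tf_1S[of t] Suc by simp
        have "oia_cell (theA \<Phi>) w 1 (Suc t) = code \<Phi> (Tf \<Phi> w 1 (Suc t))"
          unfolding st ih tf theA_simps dc using ne1 by simp
        then show ?thesis using True by (simp del: oia_cell.simps)
      qed
    qed
  next
    case False
    then have c2: "2 \<le> c" using Suc.prems by simp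
    have ihl: "(t < c - 1 \<longrightarrow> oia_cell (theA \<Phi>) w (c - 1) t = 1) \<and>
      (c - 1 \<le> t \<and> t - (c - 1) + 1 \<le> length w \<longrightarrow> oia_cell (theA \<Phi>) w (c - 1) t = code \<Phi> (Tf \<Phi> w (c - 1) (t - (c - 1) + 1)))"
      using Suc.IH[of "c - 1"] c2 by simp
    have iho: "(t < c \<longrightarrow> oia_cell (theA \<Phi>) w c t = 1) \<and>
      (c \<le> t \<and> t - c + 1 \<le> length w \<longrightarrow> oia_cell (theA \<Phi>) w c t = code \<Phi> (Tf \<Phi> w c (t - c + 1)))"
      using Suc.IH[of c] c2 by simp
    have step: "oia_cell (theA \<Phi>) w c (Suc t) = delta (theA \<Phi>) (oia_cell (theA \<Phi>) w (c - 1) t) (oia_cell (theA \<Phi>) w c t)"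
      using c2 by simp
    consider "Suc t < c" | "Suc t = c" | "c < Suc t" by linarith
    then show ?thesis
    proof cases
      case 1
      then show ?thesis using step ihl iho by (simp add: theA_simps)
    next
      case 2
      have l: "oia_cell (theA \<Phi>) w (c - 1) t = code \<Phi> (Tf \<Phi> w (c - 1) 1)"
        using ihl 2 n1 c2 by (simp del: oia_cell.simps)
      have o: "oia_cell (theA \<Phi>) w c t = 1" using iho 2 by simp
      have r: "oia_cell (theA \<Phi>) w c (Suc t) = code \<Phi> (Tf \<Phi> w c 1)"
        unfolding step l o theA_simps Tf_x1[OF c2] using crT[of "c - 1" 1] by (simp add: dc d1)
      show ?thesis using r 2 n1 by (simp del: oia_cell.simps)
    next
      case 3
      show ?thesis
      proof (intro conjI impI)
        assume "Suc t < c" then show "oia_cell (theA \<Phi>) w c (Suc t) = 1" using 3 by simp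
      next
        assume a: "c \<le> Suc t \<and> Suc t - c + 1 \<le> length w"
        define y where "y = t - c + 1"
        have y1: "1 \<le> y" and yS: "Suc t - c + 1 = Suc y" and yl: "t - (c - 1) + 1 = Suc y"
          using 3 c2 unfolding y_def by auto
        have l: "oia_cell (theA \<Phi>) w (c - 1) t = code \<Phi> (Tf \<Phi> w (c - 1) (Suc y))"
          using ihl 3 a yl yS by (simp del: oia_cell.simps)
        have o: "oia_cell (theA \<Phi>) w c t = code \<Phi> (Tf \<Phi> w c y)"
          using iho 3 a yS unfolding y_def by (simp del: oia_cell.simps)
        show "oia_cell (theA \<Phi>) w c (Suc t) = code \<Phi> (Tf \<Phi> w c (Suc t - c + 1))"
          unfolding yS step l o theA_simps Tf_xS[OF c2 y1] using crT[of "c - 1" "Suc y"] by (simp add: dc)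
      qed
    qed
  qed
qed

lemma Tf_eq: "Tf \<Phi> w x y = (if x \<le> 1 then inT \<Phi> (y \<le> 1) (w ! (y - 1)) else {}) \<union>
   compT \<Phi> (if x \<le> 1 then {} else Tf \<Phi> w (x - 1) y) (if y \<le> 1 then {} else Tf \<Phi> w x (y - 1))"
  by (subst Tf.simps) simp

lemma w_pred_eq: "1 \<le> x \<Longrightarrow> x \<noteq> 1 \<Longrightarrow> w_pred x = x - 1"
  by (simp add: w_pred_def)

lemma hatom_atom:
  assumes "1 \<le> x" "1 \<le> y" "hatom_sat (\<lambda>R x y. R \<in> Tf \<Phi> w x y) x y d"
  shows "atom_in (if x \<le> 1 then {} else Tf \<Phi> w (x - 1) y) (if y \<le> 1 then {} else Tf \<Phi> w x (y - 1)) d"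
  using assms by (cases d) (auto simp: w_min_def w_pred_eq)

lemma sem_if:
  assumes wf: "nph_wf \<Phi>" and ne: "w \<noteq> []"
    and nb: "rbot \<Phi> \<notin> Tf \<Phi> w (length w) (length w)"
  shows "nph_models w \<Phi>"
  unfolding nph_models_def
proof (intro exI ballI)
  fix x y assume x: "x \<in> {1..length w}" and y: "y \<in> {1..length w}"
  let ?I = "\<lambda>R x y. R \<in> Tf \<Phi> w x y"
  have A: "\<forall>c\<in>set (inputs \<Phi>). input_sat w ?I x y c"
  proof
    fix c assume c: "c \<in> set (inputs \<Phi>)"
    obtain b s R where cc: "c = (b, s, R)" by (cases c) auto
    show "input_sat w ?I x y c"
      unfolding input_sat_def cc
    proof (simp only: prod.case, intro impI)
      assume h: "w_min x \<and> (if b then w_min y else \<not> w_min y) \<and> w_Q w s y"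
      then have x1: "x = 1" and bb: "b = (y \<le> 1)" and ss: "s = w ! (y - 1)"
        using y by (auto simp: w_min_def w_Q_def split: if_splits)
      have "R \<in> inT \<Phi> (y \<le> 1) (w ! (y - 1))" using c cc bb ss by (simp add: inT_def)
      then show "R \<in> Tf \<Phi> w x y" using x1 by (subst Tf_eq) simp
    qed
  qed
  have B: "\<not> (w_max w x \<and> w_max w y \<and> ?I (rbot \<Phi>) x y)"
    using nb by (auto simp: w_max_def)
  have C: "\<forall>(ds, R)\<in>set (comps \<Phi>). (\<forall>d\<in>set ds. hatom_sat ?I x y d) \<longrightarrow> ?I R x y"
  proof (intro ballI, clarify)
    fix ds R assume dr: "(ds, R) \<in> set (comps \<Phi>)" and hs: "\<forall>d\<in>set ds. hatom_sat ?I x y d"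
    have "\<forall>d\<in>set ds. atom_in (if x \<le> 1 then {} else Tf \<Phi> w (x - 1) y) (if y \<le> 1 then {} else Tf \<Phi> w x (y - 1)) d"
      using hs hatom_atom[of x y \<Phi> w] x y by auto
    then have "R \<in> compT \<Phi> (if x \<le> 1 then {} else Tf \<Phi> w (x - 1) y) (if y \<le> 1 then {} else Tf \<Phi> w x (y - 1))"
      using dr unfolding compT_def by blast
    then show "R \<in> Tf \<Phi> w x y" by (subst Tf_eq) blast
  qed
  show "psi_sat \<Phi> w ?I x y" unfolding psi_sat_def using A B C by (intro conjI) auto
qed

lemma sem_only:
  assumes I: "\<forall>x\<in>{1..length w}. \<forall>y\<in>{1..length w}. psi_sat \<Phi> w I x y"
  shows "1 \<le> x \<Longrightarrow> x \<le> length w \<Longrightarrow> 1 \<le> y \<Longrightarrow> y \<le> length w \<Longrightarrow> R \<in> Tf \<Phi> w x y \<Longrightarrow> I R x y"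
proof (induction "x + y" arbitrary: x y R rule: less_induct)
  case less
  have ps: "psi_sat \<Phi> w I x y" using I less.prems by simp
  have R: "R \<in> (if x \<le> 1 then inT \<Phi> (y \<le> 1) (w ! (y - 1)) else {}) \<union>
   compT \<Phi> (if x \<le> 1 then {} else Tf \<Phi> w (x - 1) y) (if y \<le> 1 then {} else Tf \<Phi> w x (y - 1))"
    using less.prems(5) Tf_eq[of \<Phi> w x y] by simp
  then show ?case
  proof
    assume "R \<in> (if x \<le> 1 then inT \<Phi> (y \<le> 1) (w ! (y - 1)) else {})"
    then have x1: "x = 1" and inp: "(y \<le> 1, w ! (y - 1), R) \<in> set (inputs \<Phi>)"
      using less.prems by (auto simp: inT_def split: if_splits)
    have "\<forall>c\<in>set (inputs \<Phi>). input_sat w I x y c" using ps unfolding psi_sat_def by (elim conjE)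
    then have "input_sat w I x y (y \<le> 1, w ! (y - 1), R)" using inp by blast
    then show "I R x y" using x1 less.prems by (auto simp: input_sat_def w_min_def w_Q_def)
  next
    assume "R \<in> compT \<Phi> (if x \<le> 1 then {} else Tf \<Phi> w (x - 1) y) (if y \<le> 1 then {} else Tf \<Phi> w x (y - 1))"
    then obtain ds where dr: "(ds, R) \<in> set (comps \<Phi>)"
      and at: "\<forall>d\<in>set ds. atom_in (if x \<le> 1 then {} else Tf \<Phi> w (x - 1) y) (if y \<le> 1 then {} else Tf \<Phi> w x (y - 1)) d"
      unfolding compT_def by blast
    have "hatom_sat I x y d" if d: "d \<in> set ds" for d
    proof (cases d)
      case (PredX S)
      then have x2: "\<not> x \<le> 1" and S: "S \<in> Tf \<Phi> w (x - 1) y" using at d by (auto split: if_splits)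
      have "I S (x - 1) y" using less.hyps[of "x - 1" y S] x2 S less.prems by simp
      then show ?thesis using PredX x2 using less.prems by (simp add: w_pred_eq w_min_def)
    next
      case (PredY S)
      then have y2: "\<not> y \<le> 1" and S: "S \<in> Tf \<Phi> w x (y - 1)" using at d by (auto split: if_splits)
      have "I S x (y - 1)" using less.hyps[of x "y - 1" S] y2 S less.prems by simp
      then show ?thesis using PredY y2 using less.prems by (simp add: w_pred_eq w_min_def)
    qed
    moreover have "\<forall>(ds, R)\<in>set (comps \<Phi>). (\<forall>d\<in>set ds. hatom_sat I x y d) \<longrightarrow> I R x y"
      using ps unfolding psi_sat_def by (elim conjE)
    ultimately show "I R x y" using dr by fast
  qed
qed

lemma sem:
  assumes wf: "nph_wf \<Phi>" and ne: "w \<noteq> []"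
  shows "nph_models w \<Phi> \<longleftrightarrow> rbot \<Phi> \<notin> Tf \<Phi> w (length w) (length w)"
proof
  assume "nph_models w \<Phi>"
  then obtain I where I: "\<forall>x\<in>{1..length w}. \<forall>y\<in>{1..length w}. psi_sat \<Phi> w I x y"
    unfolding nph_models_def by blast
  have n1: "1 \<le> length w" using ne by (cases w) auto
  show "rbot \<Phi> \<notin> Tf \<Phi> w (length w) (length w)"
  proof
    assume "rbot \<Phi> \<in> Tf \<Phi> w (length w) (length w)"
    then have "I (rbot \<Phi>) (length w) (length w)" using sem_only[OF I] n1 by blast
    moreover have "psi_sat \<Phi> w I (length w) (length w)" using I n1 by simp
    ultimately show False unfolding psi_sat_def w_max_def by simp
  qed
next
  assume "rbot \<Phi> \<notin> Tf \<Phi> w (length w) (length w)"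
  then show "nph_models w \<Phi>" using sem_if[OF wf ne] by blast
qed

theorem lemma4:
  fixes \<Phi> :: "('a::finite, 'r) nph_formula"
  assumes "nph_wf \<Phi>"
  shows "\<exists>A :: 'a oia. oia_wf A \<and>
           (\<forall>w. w \<noteq> [] \<longrightarrow> (oia_accepts_rt A w \<longleftrightarrow> nph_models w \<Phi>))"
proof (intro exI conjI allI impI)
  show "oia_wf (theA \<Phi>)" using theA_wf[OF assms] .
next
  fix w :: "'a list" assume ne: "w \<noteq> []"
  have n1: "1 \<le> length w" using ne by (cases w) auto
  have cell: "oia_cell (theA \<Phi>) w (length w) (2 * length w - 1) = code \<Phi> (Tf \<Phi> w (length w) (length w))"
  proof -
    have e: "2 * length w - 1 - length w + 1 = length w" using n1 by simp
    show ?thesis using cell_inv[OF assms ne n1, of "2 * length w - 1"] n1 unfolding e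
      by (simp del: oia_cell.simps)
  qed
  have sub: "Tf \<Phi> w (length w) (length w) \<subseteq> rels \<Phi>" using Tf_sub[OF assms] .
  have "oia_accepts_rt (theA \<Phi>) w \<longleftrightarrow> rbot \<Phi> \<notin> Tf \<Phi> w (length w) (length w)"
    unfolding oia_accepts_rt_def cell theA_simps mem_Collect_eq
  proof
    assume "\<exists>S\<subseteq>rels \<Phi>. rbot \<Phi> \<notin> S \<and> code \<Phi> (Tf \<Phi> w (length w) (length w)) = code \<Phi> S"
    then obtain S where S: "S \<subseteq> rels \<Phi>" "rbot \<Phi> \<notin> S"
      "code \<Phi> (Tf \<Phi> w (length w) (length w)) = code \<Phi> S" by blast
    have "Tf \<Phi> w (length w) (length w) = S" using code_inj[OF assms sub S(1) S(3)] .
    then show "rbot \<Phi> \<notin> Tf \<Phi> w (length w) (length w)" using S(2) by simp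
  next
    assume "rbot \<Phi> \<notin> Tf \<Phi> w (length w) (length w)"
    then show "\<exists>S\<subseteq>rels \<Phi>. rbot \<Phi> \<notin> S \<and> code \<Phi> (Tf \<Phi> w (length w) (length w)) = code \<Phi> S"
      using sub by blast
  qed
  then show "oia_accepts_rt (theA \<Phi>) w \<longleftrightarrow> nph_models w \<Phi>" using sem[OF assms ne] by simp
qed

end
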